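(* Let $P_1,\dots,P_T$ be $p$-values and fix an index $t\le T$ with $t\in\mathcal H^0$, i.e. $\mathbb P(P_t\le x)\le x$ for all $x\in[0,1]$, and assume $P_t$ is independent of $(P_s)_{s\ne t}$. For each $i\le T$ let $f_i:\{0,1\}^{i-1}\to\mathbb R$ be coordinatewise nondecreasing, define recursively $R_i=\mathbf 1\{P_i\le f_i(R_1,\dots,R_{i-1})\}$, and let $\mathcal F^{i}=\sigma(R_1,\dots,R_{i})$. Let $g:\{0,1\}^T\to\mathbb R$ be coordinatewise nondecreasing with $g(x)>0$ for every $x\neq(0,\dots,0)$. Then $$\mathbb E\left[\frac{\mathbf 1\{P_t\le f_t(R_1,\dots,R_{t-1})\}}{g(R_1,\dots,R_T)\vee 1}\,\Big|\,\mathcal F^{t-1}\right]\le \mathbb E\left[\frac{f_t(R_1,\dots,R_{t-1})}{g(R_1,\dots,R_T)\vee 1}\,\Big|\,\mathcal F^{t-1}\right].$$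
   Context: Coordinatewise nondecreasing means: if $\tilde x_i\ge x_i$ for all coordinates $i$, then the function value at $\tilde x$ is at least the value at $x$. $a\vee b=\max\{a,b\}$.
   Formalization: The threshold $f_t$ takes only nonnegative values on $\{0,1\}^{t-1}$, rather than arbitrary real values. The statement above fails without it. *)

theory Defs
  imports "HOL-Probability.Probability"
begin

(* Coordinatewise order on 0/1-vectors, represented as bool lists of equal length. *)
definition bl_le :: "bool list \<Rightarrow> bool list \<Rightarrow> bool" where
  "bl_le xs ys \<longleftrightarrow> length xs = length ys \<and> (\<forall>i<length xs. xs ! i \<longrightarrow> ys ! i)"

definition coord_mono :: "nat \<Rightarrow> (bool list \<Rightarrow> real) \<Rightarrow> bool" where
  "coord_mono n F \<longleftrightarrow> (\<forall>xs ys. length xs = n \<longrightarrow> bl_le xs ys \<longrightarrow> F xs \<le> F ys)"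

(* Rs P f i \<omega> = [R_1 \<omega>, ..., R_i \<omega>], R_i = 1{P_i \<le> f_i(R_1,...,R_{i-1})} *)
fun Rs :: "(nat \<Rightarrow> 'a \<Rightarrow> real) \<Rightarrow> (nat \<Rightarrow> bool list \<Rightarrow> real) \<Rightarrow> nat \<Rightarrow> 'a \<Rightarrow> bool list" where
  "Rs P f 0 \<omega> = []"
| "Rs P f (Suc i) \<omega> = Rs P f i \<omega> @ [P (Suc i) \<omega> \<le> f (Suc i) (Rs P f i \<omega>)]"

end

theory Submission
  imports Defs
begin


lemma Rs_length[simp]: "length (Rs P f n \<omega>) = n"
  by (induction n) auto

lemma Rs_take: "m \<le> n \<Longrightarrow> take m (Rs P f n \<omega>) = Rs P f m \<omega>"
proof (induction n)
  case 0 then show ?case by simp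
next
  case (Suc n)
  show ?case
  proof (cases "m = Suc n")
    case True then show ?thesis by (metis Rs_length order_refl take_all)
  next
    case False
    then have "m \<le> n" using Suc by simp
    then show ?thesis using Suc by simp
  qed
qed

lemma Rs_nth: "1 \<le> i \<Longrightarrow> i \<le> n \<Longrightarrow> Rs P f n \<omega> ! (i - 1) = (P i \<omega> \<le> f i (Rs P f (i - 1) \<omega>))"
proof -
  assume a: "1 \<le> i" "i \<le> n"
  have "Rs P f n \<omega> ! (i - 1) = take i (Rs P f n \<omega>) ! (i - 1)" using a by simp
  also have "\<dots> = Rs P f i \<omega> ! (i - 1)" using a by (simp add: Rs_take)
  also have "\<dots> = (P i \<omega> \<le> f i (Rs P f (i - 1) \<omega>))"
    using a by (cases i) (auto simp: nth_append)
  finally show ?thesis .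
qed

lemma Rs_cong: "(\<And>i. i \<in> {1..n} \<Longrightarrow> P i \<omega> = P' i \<omega>') \<Longrightarrow> Rs P f n \<omega> = Rs P' f n \<omega>'"
  by (induction n) auto

lemma Rs_meas: "(\<And>i. i \<in> {1..n} \<Longrightarrow> P i \<in> borel_measurable N) \<Longrightarrow> Rs P f n \<in> measurable N (count_space UNIV)"
proof (induction n)
  case 0 then show ?case by simp
next
  case (Suc n)
  have IH: "Rs P f n \<in> measurable N (count_space UNIV)" using Suc by simp
  have m: "P (Suc n) \<in> borel_measurable N" using Suc by simp
  have step: "(\<lambda>\<omega>. xs @ [P (Suc n) \<omega> \<le> f (Suc n) xs]) \<in> measurable N (count_space UNIV)" for xs
  proof -
    have pm: "(\<lambda>\<omega>. P (Suc n) \<omega> \<le> f (Suc n) xs) \<in> measurable N (count_space UNIV)"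
      using m by measurable
    show ?thesis
      using measurable_compose[OF pm, of "\<lambda>b. xs @ [b]" "count_space UNIV"] by simp
  qed
  have "(\<lambda>\<omega>. (\<lambda>xs \<omega>. xs @ [P (Suc n) \<omega> \<le> f (Suc n) xs]) (Rs P f n \<omega>) \<omega>) \<in> measurable N (count_space UNIV)"
    by (rule measurable_compose_countable'[where I=UNIV, OF step IH]) simp
  then show ?case by simp
qed

lemma bl_le_snoc: "length xs = length ys \<Longrightarrow> bl_le (xs @ [a]) (ys @ [b]) \<longleftrightarrow> bl_le xs ys \<and> (a \<longrightarrow> b)"
  unfolding bl_le_def by (auto simp: nth_append less_Suc_eq)



theorem lemma1:
  fixes M :: "'a measure" and P :: "nat \<Rightarrow> 'a \<Rightarrow> real"
    and f :: "nat \<Rightarrow> bool list \<Rightarrow> real" and g :: "bool list \<Rightarrow> real"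
    and T t :: nat
  assumes "prob_space M"
    and rv: "\<And>i. i \<in> {1..T} \<Longrightarrow> P i \<in> borel_measurable M"
    and t: "1 \<le> t" "t \<le> T"
    and superunif: "\<And>x. 0 \<le> x \<Longrightarrow> x \<le> 1 \<Longrightarrow>
        measure M {\<omega> \<in> space M. P t \<omega> \<le> x} \<le> x"
    and indep: "prob_space.indep_var M (Pi\<^sub>M {t} (\<lambda>_. borel)) (\<lambda>\<omega>. \<lambda>s\<in>{t}. P s \<omega>)
        (Pi\<^sub>M ({1..T} - {t}) (\<lambda>_. borel)) (\<lambda>\<omega>. \<lambda>s\<in>{1..T} - {t}. P s \<omega>)"
    and f_mono: "\<And>i. i \<in> {1..T} \<Longrightarrow> coord_mono (i - 1) (f i)"
    and f_nonneg: "\<And>xs. length xs = t - 1 \<Longrightarrow> 0 \<le> f t xs"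
    and g_mono: "coord_mono T g"
    and g_pos: "\<And>xs. length xs = T \<Longrightarrow> True \<in> set xs \<Longrightarrow> g xs > 0"
  shows "AE \<omega> in M.
    real_cond_exp M (vimage_algebra (space M) (Rs P f (t - 1)) (count_space UNIV))
      (\<lambda>\<omega>. of_bool (P t \<omega> \<le> f t (Rs P f (t - 1) \<omega>)) / max (g (Rs P f T \<omega>)) 1) \<omega>
    \<le> real_cond_exp M (vimage_algebra (space M) (Rs P f (t - 1)) (count_space UNIV))
      (\<lambda>\<omega>. f t (Rs P f (t - 1) \<omega>) / max (g (Rs P f T \<omega>)) 1) \<omega>"
proof -
  interpret prob_space M by fact
  define P' where "P' = (\<lambda>s \<omega>. if s = t then 0 else P s \<omega>)"
  define W where "W = Rs P' f T"
  define F where "F = vimage_algebra (space M) (Rs P f (t - 1)) (count_space UNIV)"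
  define D where "D = (\<lambda>w. max (g w) (1::real))"
  define \<phi>1 where "\<phi>1 = (\<lambda>w. of_bool (w ! (t - 1)) / D w)"
  define \<phi>2 where "\<phi>2 = (\<lambda>w. f t (take (t - 1) w) / D w)"
  define L where "L = {w :: bool list. length w = T}"
  have finL: "finite L"
  proof -
    have "L = {xs. set xs \<subseteq> UNIV \<and> length xs = T}" unfolding L_def by auto
    then show ?thesis using finite_lists_length_eq[of "UNIV :: bool set" T] by simp
  qed
  have RT_meas: "Rs P f n \<in> measurable M (count_space UNIV)" if "n \<le> T" for n
    by (rule Rs_meas) (use rv that in auto)
  have W_meas: "W \<in> measurable M (count_space UNIV)"
    unfolding W_def by (rule Rs_meas) (use rv in \<open>auto simp: P'_def\<close>)
  have Rs_P'_early: "Rs P' f n \<omega> = Rs P f n \<omega>" if "n < t" for n \<omega>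
    by (rule Rs_cong) (use that in \<open>auto simp: P'_def\<close>)
  have W_prefix: "take (t - 1) (W \<omega>) = Rs P f (t - 1) \<omega>" for \<omega>
  proof -
    have "take (t - 1) (W \<omega>) = Rs P' f (t - 1) \<omega>" unfolding W_def using t by (simp add: Rs_take)
    then show ?thesis using Rs_P'_early[of "t - 1" \<omega>] t by simp
  qed
  have h1_eq: "of_bool (P t \<omega> \<le> f t (Rs P f (t - 1) \<omega>)) / max (g (Rs P f T \<omega>)) 1 = \<phi>1 (Rs P f T \<omega>)" for \<omega>
    unfolding \<phi>1_def D_def using Rs_nth[OF t, of P f \<omega>] by simp
  have h2_eq: "f t (Rs P f (t - 1) \<omega>) / max (g (Rs P f T \<omega>)) 1 = \<phi>2 (Rs P f T \<omega>)" for \<omega>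
    unfolding \<phi>2_def D_def using t by (simp add: Rs_take)
  have integ: "integrable M (\<lambda>\<omega>. \<phi> (V \<omega>))" if V: "V \<in> measurable M (count_space UNIV)" "\<And>\<omega>. length (V \<omega>) = T" for \<phi> :: "bool list \<Rightarrow> real" and V
  proof -
    have "integrable M (\<lambda>\<omega>. \<Sum>w\<in>L. \<phi> w * indicator {\<omega> \<in> space M. V \<omega> = w} \<omega>)"
    proof -
      have "\<And>w. {\<omega> \<in> space M. V \<omega> = w} \<in> sets M" using V(1) by measurable
      then show ?thesis by (auto intro!: integrable_sum integrable_real_indicator simp: emeasure_finite less_top[symmetric])
    qed
    moreover have eqp: "(\<Sum>w\<in>L. \<phi> w * indicator {\<omega> \<in> space M. V \<omega> = w} \<omega>) = \<phi> (V \<omega>)"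
      if "\<omega> \<in> space M" for \<omega>
    proof -
      have "(\<Sum>w\<in>L. \<phi> w * indicator {\<omega> \<in> space M. V \<omega> = w} \<omega>) = (\<Sum>w\<in>L. if w = V \<omega> then \<phi> (V \<omega>) else 0)"
        using that by (intro sum.cong) (auto simp: indicator_def)
      also have "\<dots> = \<phi> (V \<omega>)" using finL V(2) by (simp add: L_def)
      finally show ?thesis .
    qed
    moreover have "integrable M (\<lambda>\<omega>. \<Sum>w\<in>L. \<phi> w * indicator {\<omega> \<in> space M. V \<omega> = w} \<omega>) = integrable M (\<lambda>\<omega>. \<phi> (V \<omega>))"
      by (rule Bochner_Integration.integrable_cong) (auto simp: eqp)
    ultimately show ?thesis by blast
  qed
  have mono_W: "bl_le (Rs P f n \<omega>) (Rs P' f n \<omega>)" if "n \<le> T" for n \<omega>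
    using that
  proof (induction n)
    case 0 show ?case by (simp add: bl_le_def)
  next
    case (Suc n)
    have IH: "bl_le (Rs P f n \<omega>) (Rs P' f n \<omega>)" using Suc by simp
    have "(P (Suc n) \<omega> \<le> f (Suc n) (Rs P f n \<omega>)) \<longrightarrow> (P' (Suc n) \<omega> \<le> f (Suc n) (Rs P' f n \<omega>))"
    proof (cases "Suc n = t")
      case True
      have len: "length (Rs P' f n \<omega>) = t - 1" using True by simp
      have "0 \<le> f (Suc n) (Rs P' f n \<omega>)" using f_nonneg[OF len] True by simp
      then show ?thesis using True by (simp add: P'_def)
    next
      case False
      have "coord_mono n (f (Suc n))" using f_mono[of "Suc n"] Suc.prems by simp
      then have "f (Suc n) (Rs P f n \<omega>) \<le> f (Suc n) (Rs P' f n \<omega>)" using IH unfolding coord_mono_def by simp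
      then show ?thesis using False by (auto simp: P'_def)
    qed
    then show ?case using IH by (simp add: bl_le_snoc)
  qed
  have eq_W: "Rs P f n \<omega> = Rs P' f n \<omega>" if "P t \<omega> \<le> f t (Rs P f (t - 1) \<omega>)" "t \<le> n" for n \<omega>
    using that(2)
  proof (induction n)
    case 0 then show ?case using t by simp
  next
    case (Suc n)
    show ?case
    proof (cases "Suc n = t")
      case True
      then have e: "Rs P f n \<omega> = Rs P' f n \<omega>" using Rs_P'_early[of n \<omega>] by simp
      have len: "length (Rs P' f n \<omega>) = t - 1" using True by simp
      have z: "0 \<le> f t (Rs P' f n \<omega>)" by (rule f_nonneg[OF len])
      have nt: "n = t - 1" using True by simp
      have a: "P (Suc n) \<omega> \<le> f (Suc n) (Rs P f n \<omega>)" using that(1) True nt by simp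
      have b: "P' (Suc n) \<omega> \<le> f (Suc n) (Rs P' f n \<omega>)" using z True by (simp add: P'_def)
      show ?thesis unfolding Rs.simps using e a b by simp
    next
      case False
      then have "t \<le> n" using Suc.prems by simp
      then show ?thesis using Suc.IH False by (simp add: P'_def)
    qed
  qed
  have D_mono: "D (Rs P f T \<omega>) \<le> D (W \<omega>)" for \<omega>
  proof -
    have "g (Rs P f T \<omega>) \<le> g (W \<omega>)" using g_mono mono_W[of T \<omega>] unfolding coord_mono_def W_def by simp
    then show ?thesis unfolding D_def by simp
  qed
  have D_ge1: "1 \<le> D w" for w unfolding D_def by simp
  have subalg: "subalgebra M F"
  proof -
    have "sets F = {Rs P f (t - 1) -` B \<inter> space M | B. B \<in> sets (count_space UNIV)}"
      unfolding F_def by (rule sets_vimage_algebra2) simp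
    moreover have "Rs P f (t - 1) -` B \<inter> space M \<in> sets M" for B
      using measurable_sets[OF RT_meas[of "t - 1"], of B] t by simp
    ultimately show ?thesis unfolding subalgebra_def F_def by auto
  qed
  interpret S: finite_measure_subalgebra M F
    by unfold_locales (rule subalg)
  define I where "I = {1..T} - {t}"
  define X where "X = (\<lambda>\<omega>. \<lambda>s\<in>{t}. P s \<omega>)"
  define Y where "Y = (\<lambda>\<omega>. \<lambda>s\<in>I. P s \<omega>)"
  define \<Phi> where "\<Phi> = Rs (\<lambda>s q. if s \<in> I then q s else 0) f T"
  have indset: "indep_set (sigma_sets (space M) { X -` A \<inter> space M | A. A \<in> sets (Pi\<^sub>M {t} (\<lambda>_. borel))})
      (sigma_sets (space M) { Y -` A \<inter> space M | A. A \<in> sets (Pi\<^sub>M I (\<lambda>_. borel))})"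
    using indep unfolding indep_var_eq X_def Y_def I_def by blast
  have \<Phi>_meas: "\<Phi> \<in> measurable (Pi\<^sub>M I (\<lambda>_. borel)) (count_space UNIV)"
    unfolding \<Phi>_def
  proof (rule Rs_meas)
    fix i assume "i \<in> {1..T}"
    show "(\<lambda>q. if i \<in> I then q i else 0) \<in> borel_measurable (Pi\<^sub>M I (\<lambda>_. borel :: real measure))"
      by (cases "i \<in> I") (auto intro: measurable_component_singleton)
  qed
  have W_Phi: "W \<omega> = \<Phi> (Y \<omega>)" for \<omega>
    unfolding W_def \<Phi>_def by (rule Rs_cong) (auto simp: P'_def Y_def I_def)
  define E1 where "E1 = (\<lambda>w. {\<omega> \<in> space M. W \<omega> = w})"
  define E2 where "E2 = (\<lambda>x. {\<omega> \<in> space M. P t \<omega> \<le> x})"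
  have E1_sets: "E1 w \<in> sets M" for w unfolding E1_def using W_meas by measurable
  have E2_sets: "E2 x \<in> sets M" for x proof -
    have "P t \<in> borel_measurable M" using rv t by simp
    then show ?thesis unfolding E2_def by measurable
  qed
  have prod_E: "measure M (E2 x \<inter> E1 w) = measure M (E2 x) * measure M (E1 w)" for x w
  proof (rule indep_setD[OF indset])
    have cm: "(\<lambda>y. y t) \<in> borel_measurable (Pi\<^sub>M {t} (\<lambda>_. borel :: real measure))"
      by (rule measurable_component_singleton) simp
    have "{y \<in> space (Pi\<^sub>M {t} (\<lambda>_. borel :: real measure)). y t \<le> x} \<in> sets (Pi\<^sub>M {t} (\<lambda>_. borel))"
      using cm by measurable
    moreover have "E2 x = X -` {y \<in> space (Pi\<^sub>M {t} (\<lambda>_. borel :: real measure)). y t \<le> x} \<inter> space M"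
      unfolding E2_def X_def by (auto simp: space_PiM)
    ultimately show "E2 x \<in> sigma_sets (space M) { X -` A \<inter> space M | A. A \<in> sets (Pi\<^sub>M {t} (\<lambda>_. borel))}"
      by blast
    have "\<Phi> -` {w} \<inter> space (Pi\<^sub>M I (\<lambda>_. borel :: real measure)) \<in> sets (Pi\<^sub>M I (\<lambda>_. borel))"
      using \<Phi>_meas by measurable
    moreover have "E1 w = Y -` (\<Phi> -` {w} \<inter> space (Pi\<^sub>M I (\<lambda>_. borel :: real measure))) \<inter> space M"
      unfolding E1_def Y_def using W_Phi by (auto simp: space_PiM Y_def)
    ultimately show "E1 w \<in> sigma_sets (space M) { Y -` A \<inter> space M | A. A \<in> sets (Pi\<^sub>M I (\<lambda>_. borel))}"
      by blast
  qed
  have RT_len: "length (Rs P f T \<omega>) = T" for \<omega> by simp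
  have W_len: "length (W \<omega>) = T" for \<omega> unfolding W_def by simp
  have RT_measT: "Rs P f T \<in> measurable M (count_space UNIV)" using RT_meas by simp
  have key: "(\<integral>\<omega>. indicator A \<omega> * \<phi>1 (Rs P f T \<omega>) \<partial>M) \<le> (\<integral>\<omega>. indicator A \<omega> * \<phi>2 (Rs P f T \<omega>) \<partial>M)"
    if A: "A \<in> sets F" for A
  proof -
    have "sets F = {Rs P f (t - 1) -` B \<inter> space M | B. B \<in> sets (count_space UNIV)}"
      unfolding F_def by (rule sets_vimage_algebra2) simp
    then obtain B where AB: "A = Rs P f (t - 1) -` B \<inter> space M" using A by auto
    have indA: "indicator A \<omega> = (indicator B (take (t - 1) (Rs P f T \<omega>)) :: real)" if "\<omega> \<in> space M" for \<omega>
      using that t unfolding AB by (simp add: Rs_take indicator_def)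
    have indA1: "indicator A \<omega> = (indicator B (Rs P f (t - 1) \<omega>) :: real)" if "\<omega> \<in> space M" for \<omega>
      using that unfolding AB by (simp add: indicator_def)
    define k where "k = (\<lambda>w. (indicator B (take (t - 1) w) :: real) / D w)"
    define c where "c = (\<lambda>w. f t (take (t - 1) w))"
    have k_nn: "0 \<le> k w" for w unfolding k_def using D_ge1[of w] by simp
    have c_nn: "0 \<le> c w" if "w \<in> L" for w
      unfolding c_def using that t by (intro f_nonneg) (simp add: L_def)
    have int_ind: "integrable M (\<lambda>\<omega>. a * indicator S \<omega>)" if "S \<in> sets M" for S and a :: real
      using that by (auto simp: emeasure_finite less_top[symmetric])
    have "(\<integral>\<omega>. indicator A \<omega> * \<phi>1 (Rs P f T \<omega>) \<partial>M)
        = (\<integral>\<omega>. (\<Sum>w\<in>L. k w * indicator (E2 (c w) \<inter> E1 w) \<omega>) \<partial>M)"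
    proof (rule Bochner_Integration.integral_cong[OF refl])
      fix \<omega> assume om: "\<omega> \<in> space M"
      have "(\<Sum>w\<in>L. k w * indicator (E2 (c w) \<inter> E1 w) \<omega>)
          = (\<Sum>w\<in>L. if w = W \<omega> then k (W \<omega>) * of_bool (P t \<omega> \<le> c (W \<omega>)) else 0)"
        using om by (intro sum.cong) (auto simp: indicator_def E1_def E2_def)
      also have "\<dots> = k (W \<omega>) * of_bool (P t \<omega> \<le> c (W \<omega>))"
        using finL W_len by (simp add: L_def)
      also have "\<dots> = indicator A \<omega> * \<phi>1 (Rs P f T \<omega>)"
      proof (cases "P t \<omega> \<le> f t (Rs P f (t - 1) \<omega>)")
        case True
        then have eqRW: "Rs P f T \<omega> = W \<omega>" using eq_W t unfolding W_def by blast
        have n1: "W \<omega> ! (t - 1)" using Rs_nth[OF t, of P f \<omega>] True eqRW by simp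
        show ?thesis unfolding \<phi>1_def eqRW c_def k_def W_prefix indA1[OF om] using True n1 by simp
      next
        case False
        have n1: "\<not> Rs P f T \<omega> ! (t - 1)" using Rs_nth[OF t, of P f \<omega>] False by simp
        show ?thesis unfolding \<phi>1_def c_def k_def W_prefix using False n1 by simp
      qed
      finally show "indicator A \<omega> * \<phi>1 (Rs P f T \<omega>) = (\<Sum>w\<in>L. k w * indicator (E2 (c w) \<inter> E1 w) \<omega>)" by simp
    qed
    also have "\<dots> = (\<Sum>w\<in>L. (\<integral>\<omega>. k w * indicator (E2 (c w) \<inter> E1 w) \<omega> \<partial>M))"
      by (rule Bochner_Integration.integral_sum) (rule int_ind, rule sets.Int[OF E2_sets E1_sets])
    also have "\<dots> = (\<Sum>w\<in>L. k w * measure M (E2 (c w) \<inter> E1 w))"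
    proof (rule sum.cong[OF refl])
      fix w
      have "E2 (c w) \<inter> E1 w \<inter> space M = E2 (c w) \<inter> E1 w" by (auto simp: E1_def)
      then show "(\<integral>\<omega>. k w * indicator (E2 (c w) \<inter> E1 w) \<omega> \<partial>M) = k w * measure M (E2 (c w) \<inter> E1 w)"
        by simp
    qed
    also have "\<dots> \<le> (\<Sum>w\<in>L. k w * (c w * measure M (E1 w)))"
    proof (rule sum_mono)
      fix w assume wL: "w \<in> L"
      have "measure M (E2 (c w)) \<le> c w"
      proof (cases "c w \<le> 1")
        case True then show ?thesis using superunif[of "c w"] c_nn[OF wL] by (simp add: E2_def)
      next
        case False
        have "measure M (E2 (c w)) \<le> 1" by (rule prob_le_1)
        then show ?thesis using False by linarith
      qed
      then have "measure M (E2 (c w) \<inter> E1 w) \<le> c w * measure M (E1 w)"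
        unfolding prod_E by (rule mult_right_mono) simp
      then show "k w * measure M (E2 (c w) \<inter> E1 w) \<le> k w * (c w * measure M (E1 w))"
        by (rule mult_left_mono) (rule k_nn)
    qed
    also have "\<dots> = (\<Sum>w\<in>L. (\<integral>\<omega>. (k w * c w) * indicator (E1 w) \<omega> \<partial>M))"
    proof (rule sum.cong[OF refl])
      fix w
      have "E1 w \<inter> space M = E1 w" by (auto simp: E1_def)
      then show "k w * (c w * measure M (E1 w)) = (\<integral>\<omega>. (k w * c w) * indicator (E1 w) \<omega> \<partial>M)"
        by simp
    qed
    also have "\<dots> = (\<integral>\<omega>. (\<Sum>w\<in>L. (k w * c w) * indicator (E1 w) \<omega>) \<partial>M)"
      by (rule Bochner_Integration.integral_sum[symmetric]) (rule int_ind, rule E1_sets)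
    also have "\<dots> = (\<integral>\<omega>. k (W \<omega>) * c (W \<omega>) \<partial>M)"
    proof (rule Bochner_Integration.integral_cong[OF refl])
      fix \<omega> assume om: "\<omega> \<in> space M"
      have "(\<Sum>w\<in>L. (k w * c w) * indicator (E1 w) \<omega>) = (\<Sum>w\<in>L. if w = W \<omega> then k (W \<omega>) * c (W \<omega>) else 0)"
        using om by (intro sum.cong) (auto simp: indicator_def E1_def)
      also have "\<dots> = k (W \<omega>) * c (W \<omega>)" using finL W_len by (simp add: L_def)
      finally show "(\<Sum>w\<in>L. (k w * c w) * indicator (E1 w) \<omega>) = k (W \<omega>) * c (W \<omega>)" .
    qed
    also have "\<dots> \<le> (\<integral>\<omega>. indicator B (take (t - 1) (Rs P f T \<omega>)) * \<phi>2 (Rs P f T \<omega>) \<partial>M)"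
    proof (rule integral_mono)
      show "integrable M (\<lambda>\<omega>. k (W \<omega>) * c (W \<omega>))"
        using integ[OF W_meas W_len, of "\<lambda>w. k w * c w"] by simp
      show "integrable M (\<lambda>\<omega>. indicator B (take (t - 1) (Rs P f T \<omega>)) * \<phi>2 (Rs P f T \<omega>))"
        using integ[OF RT_measT RT_len, of "\<lambda>w. indicator B (take (t - 1) w) * \<phi>2 w"] by simp
      fix \<omega> assume om: "\<omega> \<in> space M"
      have pre: "take (t - 1) (Rs P f T \<omega>) = Rs P f (t - 1) \<omega>" using t by (simp add: Rs_take)
      have fn: "0 \<le> f t (Rs P f (t - 1) \<omega>)" using t by (intro f_nonneg) simp
      have "f t (Rs P f (t - 1) \<omega>) / D (W \<omega>) \<le> f t (Rs P f (t - 1) \<omega>) / D (Rs P f T \<omega>)"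
        using fn D_mono[of \<omega>] D_ge1[of "Rs P f T \<omega>"] by (intro divide_left_mono) auto
      then show "k (W \<omega>) * c (W \<omega>) \<le> indicator B (take (t - 1) (Rs P f T \<omega>)) * \<phi>2 (Rs P f T \<omega>)"
        unfolding k_def c_def \<phi>2_def W_prefix pre by (auto simp: indicator_def)
    qed
    also have "\<dots> = (\<integral>\<omega>. indicator A \<omega> * \<phi>2 (Rs P f T \<omega>) \<partial>M)"
      by (rule Bochner_Integration.integral_cong[OF refl]) (simp add: indA)
    finally show ?thesis .
  qed
  define G1 where "G1 = (\<lambda>\<omega>. \<phi>1 (Rs P f T \<omega>))"
  define G2 where "G2 = (\<lambda>\<omega>. \<phi>2 (Rs P f T \<omega>))"
  have iG1: "integrable M G1" unfolding G1_def by (rule integ[OF RT_measT RT_len])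
  have iG2: "integrable M G2" unfolding G2_def by (rule integ[OF RT_measT RT_len])
  have iG: "integrable M (\<lambda>\<omega>. G2 \<omega> - G1 \<omega>)" using iG1 iG2 by simp
  define U where "U = real_cond_exp M F (\<lambda>\<omega>. G2 \<omega> - G1 \<omega>)"
  have diffAE: "AE \<omega> in M. U \<omega> = real_cond_exp M F G2 \<omega> - real_cond_exp M F G1 \<omega>"
    unfolding U_def by (rule S.real_cond_exp_diff[OF iG2 iG1])
  have iU: "integrable M U" unfolding U_def by (rule S.real_cond_exp_int(1)[OF iG])
  define Z where "Z = {\<omega> \<in> space M. U \<omega> < 0}"
  have UF: "U \<in> borel_measurable F" unfolding U_def by (rule borel_measurable_cond_exp)
  have ZF: "Z \<in> sets F"
  proof -
    have "{\<omega> \<in> space F. U \<omega> < 0} \<in> sets F" using UF by measurable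
    then show ?thesis unfolding Z_def F_def by simp
  qed
  have ZM: "Z \<in> sets M" using subalg ZF unfolding subalgebra_def by blast
  have "(\<integral>\<omega>. indicator Z \<omega> * U \<omega> \<partial>M) = (\<integral>\<omega>. indicator Z \<omega> * (G2 \<omega> - G1 \<omega>) \<partial>M)"
    using S.real_cond_exp_intA[OF iG ZF] unfolding U_def set_lebesgue_integral_def by simp
  also have "\<dots> = (\<integral>\<omega>. indicator Z \<omega> * G2 \<omega> \<partial>M) - (\<integral>\<omega>. indicator Z \<omega> * G1 \<omega> \<partial>M)"
  proof -
    have a: "integrable M (\<lambda>\<omega>. indicator Z \<omega> * G2 \<omega>)"
      using integrable_mult_indicator[OF ZM iG2] by simp
    have b: "integrable M (\<lambda>\<omega>. indicator Z \<omega> * G1 \<omega>)"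
      using integrable_mult_indicator[OF ZM iG1] by simp
    show ?thesis using Bochner_Integration.integral_diff[OF a b] by (simp add: algebra_simps)
  qed
  also have "\<dots> \<ge> 0" using key[OF ZF] unfolding G1_def G2_def by simp
  finally have intZ: "0 \<le> (\<integral>\<omega>. indicator Z \<omega> * U \<omega> \<partial>M)" .
  define V where "V = (\<lambda>\<omega>. - (indicator Z \<omega> * U \<omega>))"
  have V_nn: "0 \<le> V \<omega>" for \<omega> unfolding V_def Z_def by (auto simp: indicator_def)
  have iV: "integrable M V" unfolding V_def using integrable_mult_indicator[OF ZM iU] by simp
  have "integral\<^sup>L M V = 0"
  proof -
    have "integral\<^sup>L M V = - (\<integral>\<omega>. indicator Z \<omega> * U \<omega> \<partial>M)" unfolding V_def by simp
    moreover have "0 \<le> integral\<^sup>L M V" using V_nn by (simp add: Bochner_Integration.integral_nonneg)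
    ultimately show ?thesis using intZ by linarith
  qed
  then have "AE \<omega> in M. V \<omega> = 0"
    using integral_nonneg_eq_0_iff_AE[OF iV] V_nn by simp
  then have "AE \<omega> in M. 0 \<le> U \<omega>"
  proof (rule AE_mp[OF _ AE_I2[OF impI]])
    fix \<omega> assume om: "\<omega> \<in> space M" and "V \<omega> = 0"
    then show "0 \<le> U \<omega>" unfolding V_def Z_def by (auto simp: indicator_def split: if_splits)
  qed
  then have fin: "AE \<omega> in M. real_cond_exp M F G1 \<omega> \<le> real_cond_exp M F G2 \<omega>"
    using diffAE by eventually_elim simp
  have e1: "(\<lambda>\<omega>. of_bool (P t \<omega> \<le> f t (Rs P f (t - 1) \<omega>)) / max (g (Rs P f T \<omega>)) 1) = G1"
    unfolding G1_def using h1_eq by simp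
  have e2: "(\<lambda>\<omega>. f t (Rs P f (t - 1) \<omega>) / max (g (Rs P f T \<omega>)) 1) = G2"
    unfolding G2_def using h2_eq by simp
  show ?thesis unfolding e1 e2 F_def[symmetric] by (rule fin)
qed

end
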